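(* Let $n\ge 2$ objects be auctioned to two bidders ${\mathcal B}$ and ${\mathcal A}$ in the simultaneous sealed-bid multiple-object auction described in the context. Suppose ${\mathcal B}$ uses the following randomized bidding algorithm to produce his bids $b_1,\dots,b_n$. Let $s(v)=\frac{81}{2}\cdot\frac{v}{2-3v}$ and let $h(x,y,z)=s(|x-y|+|y-z|+|z-x|)$ on $[0,\tfrac13]^3$, viewed as a probability density function on $[0,\tfrac13]^3$. Let $F_2$ denote the uniform distribution on $[0,\frac{2}{n}]$. Case 1: $n=2m$ is even. Draw $b_1$ from $F_2$ and set $b_i=b_1$ and $b_{m+i}=\frac{2}{n}-b_1$ for $i=1,\dots,m$. Case 2: $n=2m+1$ is odd. Draw $b_1$ from $F_2$ and set $b_i=b_1$ and $b_{m-1+i}=\frac{2}{n}-b_1$ for $i=1,\dots,m-1$. Independently draw $(x,y,z)$ with density $h$ and set $b_{2m-1}=\frac{3}{n}(x-y+\frac13)$, $b_{2m}=\frac{3}{n}(y-z+\frac13)$, $b_{2m+1}=\frac{3}{n}(z-x+\frac13)$. Then for every (possibly randomized) bidding strategy of ${\mathcal A}$ (chosen with knowledge of this algorithm but independently of ${\mathcal B}$'s random choices), the expected number of objects won by ${\mathcal B}$ is at least $n/2$. Moreover this is optimal: for every bidding algorithm of ${\mathcal B}$, ${\mathcal A}$ has a strategy under which the expected number of objects won by ${\mathcal B}$ is at most $n/2$.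
   Context: Auction model: $n$ objects are auctioned simultaneously. Each bidder has a total budget normalized to $1$ and submits, simultaneously with the other bidders, a vector of bids (one bid for each object, positive real numbers) whose sum is at most $1$. Each object is won by the bidder with the highest bid on it, who pays that bid; if $m$ bidders tie for the highest bid on an object, each wins it with probability $1/m$. Each bidder wants to maximize the expected number of objects he wins. A randomized bidding algorithm is a procedure producing a random bid vector. The adversary ${\mathcal A}$ knows ${\mathcal B}$'s bidding algorithm (but not the outcomes of ${\mathcal B}$'s random choices); ${\mathcal B}$ does not know ${\mathcal A}$'s algorithm. *)

theory Defs
  imports "HOL-Probability.Probability"
begin

text \<open>Objects are indexed 0,...,n-1 (object k+1 of the paper is index k).
  A bid vector is an element of the product space of n real lines.\<close>

definition bid_space :: "nat \<Rightarrow> (nat \<Rightarrow> real) measure" where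
  "bid_space n = PiM {..<n} (\<lambda>_. borel)"

definition valid_bid :: "nat \<Rightarrow> (nat \<Rightarrow> real) \<Rightarrow> bool" where
  "valid_bid n b \<longleftrightarrow> (\<forall>i<n. b i > 0) \<and> (\<Sum>i<n. b i) \<le> 1"

text \<open>A randomized bidding algorithm = the probability distribution of the random bid
  vector it produces; it must (almost surely) produce admissible bid vectors.\<close>
definition rand_strategy :: "nat \<Rightarrow> (nat \<Rightarrow> real) measure \<Rightarrow> bool" where
  "rand_strategy n M \<longleftrightarrow> sets M = sets (bid_space n) \<and> prob_space M \<and>
     (AE b in M. valid_bid n b)"

text \<open>Expected share of one object won by the bidder bidding x against bid y
  (ties broken uniformly at random).\<close>
definition win :: "real \<Rightarrow> real \<Rightarrow> real" where
  "win x y = (if x > y then 1 else if x = y then 1/2 else 0)"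

definition exp_wins :: "nat \<Rightarrow> (nat \<Rightarrow> real) measure \<Rightarrow> (nat \<Rightarrow> real) measure \<Rightarrow> real" where
  "exp_wins n MB MA = integral\<^sup>L (MB \<Otimes>\<^sub>M MA) (\<lambda>(b, a). \<Sum>i<n. win (b i) (a i))"

definition s_fun :: "real \<Rightarrow> real" where
  "s_fun v = (81 / 2) * (v / (2 - 3 * v))"

definition h_fun :: "real \<times> real \<times> real \<Rightarrow> real" where
  "h_fun p = (case p of (x,y,z) \<Rightarrow> s_fun (\<bar>x - y\<bar> + \<bar>y - z\<bar> + \<bar>z - x\<bar>))"

definition cube3 :: "(real \<times> real \<times> real) set" where
  "cube3 = {(x,y,z). 0 \<le> x \<and> x \<le> 1/3 \<and> 0 \<le> y \<and> y \<le> 1/3 \<and> 0 \<le> z \<and> z \<le> 1/3}"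

definition h_measure :: "(real \<times> real \<times> real) measure" where
  "h_measure = density lborel (\<lambda>p. indicator cube3 p * ennreal (h_fun p))"

definition F2 :: "nat \<Rightarrow> real measure" where
  "F2 n = uniform_measure lborel {0 .. 2 / real n}"

definition alg_B :: "nat \<Rightarrow> (nat \<Rightarrow> real) measure" where
  "alg_B n = (if even n then
      distr (F2 n) (bid_space n)
        (\<lambda>t. \<lambda>i\<in>{..<n}. if i < n div 2 then t else 2 / real n - t)
    else
      distr (F2 n \<Otimes>\<^sub>M h_measure) (bid_space n)
        (\<lambda>(t, x, y, z). \<lambda>i\<in>{..<n}.
           if i < n div 2 - 1 then t
           else if i < 2 * (n div 2) - 2 then 2 / real n - t
           else if i = 2 * (n div 2) - 2 then 3 / real n * (x - y + 1/3)
           else if i = 2 * (n div 2) - 1 then 3 / real n * (y - z + 1/3)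
           else 3 / real n * (z - x + 1/3)))"

end

theory Submission
  imports Defs
begin


lemma pred_Ioc[measurable]: fixes f g h :: "'a \<Rightarrow> real"
  assumes [measurable]: "f \<in> borel_measurable M" "g \<in> borel_measurable M" "h \<in> borel_measurable M"
  shows "Measurable.pred M (\<lambda>x. f x \<in> {g x<..h x})"
  by (simp add: greaterThanAtMost_iff) measurable
lemma pred_Ico[measurable]: fixes f g h :: "'a \<Rightarrow> real"
  assumes [measurable]: "f \<in> borel_measurable M" "g \<in> borel_measurable M" "h \<in> borel_measurable M"
  shows "Measurable.pred M (\<lambda>x. f x \<in> {g x..<h x})"
  by (simp add: atLeastLessThan_iff) measurable
lemma pred_Icc[measurable]: fixes f g h :: "'a \<Rightarrow> real"
  assumes [measurable]: "f \<in> borel_measurable M" "g \<in> borel_measurable M" "h \<in> borel_measurable M"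
  shows "Measurable.pred M (\<lambda>x. f x \<in> {g x..h x})"
  by (simp add: atLeastAtMost_iff) measurable
lemma pred_Ioo[measurable]: fixes f g h :: "'a \<Rightarrow> real"
  assumes [measurable]: "f \<in> borel_measurable M" "g \<in> borel_measurable M" "h \<in> borel_measurable M"
  shows "Measurable.pred M (\<lambda>x. f x \<in> {g x<..<h x})"
  by (simp add: greaterThanLessThan_iff) measurable

lemma nn_pair:
  fixes F :: "'a::euclidean_space \<times> 'b::euclidean_space \<Rightarrow> ennreal"
  assumes "F \<in> borel_measurable borel"
  shows "(\<integral>\<^sup>+p. F p \<partial>lborel) = (\<integral>\<^sup>+x. \<integral>\<^sup>+y. F (x,y) \<partial>lborel \<partial>lborel)"
  by (subst lborel.nn_integral_fst) (simp_all add: lborel_prod assms)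

lemma tri:
  fixes F :: "real \<times> real \<times> real \<Rightarrow> ennreal"
  assumes [measurable]: "F \<in> borel_measurable borel"
  shows "(\<integral>\<^sup>+p. F p \<partial>lborel) = (\<integral>\<^sup>+x. \<integral>\<^sup>+y. \<integral>\<^sup>+z. F (x,y,z) \<partial>lborel \<partial>lborel \<partial>lborel)"
proof -
  have "(\<integral>\<^sup>+p. F p \<partial>lborel) = (\<integral>\<^sup>+x. \<integral>\<^sup>+q. F (x,q) \<partial>lborel \<partial>lborel)"
    by (rule nn_pair) simp
  also have "\<dots> = (\<integral>\<^sup>+x. \<integral>\<^sup>+y. \<integral>\<^sup>+z. F (x,y,z) \<partial>lborel \<partial>lborel \<partial>lborel)"
    by (rule nn_integral_cong, rule nn_pair) measurable
  finally show ?thesis .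
qed

lemma swap2:
  fixes f :: "real \<Rightarrow> real \<Rightarrow> ennreal"
  assumes "(\<lambda>(x,y). f x y) \<in> borel_measurable (borel \<Otimes>\<^sub>M borel)"
  shows "(\<integral>\<^sup>+x. \<integral>\<^sup>+y. f x y \<partial>lborel \<partial>lborel) = (\<integral>\<^sup>+y. \<integral>\<^sup>+x. f x y \<partial>lborel \<partial>lborel)"
  apply (rule lborel_pair.Fubini'[symmetric])
  apply (subst measurable_cong_sets[OF sets_pair_measure_cong[OF sets_lborel sets_lborel] refl])
  apply (rule assms)
  done

lemma swap12:
  fixes F :: "real \<times> real \<times> real \<Rightarrow> ennreal"
  assumes [measurable]: "F \<in> borel_measurable (borel \<Otimes>\<^sub>M (borel \<Otimes>\<^sub>M borel))"
  shows "(\<integral>\<^sup>+x. \<integral>\<^sup>+y. \<integral>\<^sup>+z. F (x,y,z) \<partial>lborel \<partial>lborel \<partial>lborel)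
       = (\<integral>\<^sup>+y. \<integral>\<^sup>+x. \<integral>\<^sup>+z. F (x,y,z) \<partial>lborel \<partial>lborel \<partial>lborel)"
  apply (rule swap2)
  apply measurable
  done

lemma swap23:
  fixes F :: "real \<times> real \<times> real \<Rightarrow> ennreal"
  assumes [measurable]: "F \<in> borel_measurable (borel \<Otimes>\<^sub>M (borel \<Otimes>\<^sub>M borel))"
  shows "(\<integral>\<^sup>+x. \<integral>\<^sup>+y. \<integral>\<^sup>+z. F (x,y,z) \<partial>lborel \<partial>lborel \<partial>lborel)
       = (\<integral>\<^sup>+x. \<integral>\<^sup>+z. \<integral>\<^sup>+y. F (x,y,z) \<partial>lborel \<partial>lborel \<partial>lborel)"
  apply (rule nn_integral_cong)
  apply (rule swap2)
  apply measurable
  done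



definition gg :: "real \<Rightarrow> real" where "gg t = 27/2 * t / (1/3 - t)"

lemma gg_meas[measurable]: "gg \<in> borel_measurable borel"
  unfolding gg_def by measurable

lemma int_lin:
  assumes "0 \<le> u" "u < 1/3"
  shows "(\<integral>\<^sup>+t. ennreal (27/2 * t) * indicator {u<..<1/3} t \<partial>lborel) = ennreal (27/4 * ((1/3)\<^sup>2 - u\<^sup>2))"
proof -
  have "(\<integral>\<^sup>+t. ennreal (27/2 * t) * indicator {u<..<1/3} t \<partial>lborel)
      = (\<integral>\<^sup>+t. ennreal (27/2 * t) * indicator {u..1/3} t \<partial>lborel)"
    apply (rule nn_integral_cong_AE)
    using AE_lborel_singleton[of u] AE_lborel_singleton[of "1/3"]
    apply eventually_elim
    apply (auto simp: indicator_def)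
    done
  also have "\<dots> = ennreal (27/4 * (1/3)\<^sup>2 - 27/4 * u\<^sup>2)"
    apply (rule nn_integral_FTC_Icc[where F="\<lambda>t. 27/4 * t\<^sup>2"])
    using assms
       apply (auto intro!: derivative_eq_intros)
    done
  finally show ?thesis by (simp add: algebra_simps)
qed

lemma inner_y:
  assumes "0 \<le> u" "u < 1/3"
  shows "(\<integral>\<^sup>+y. ennreal (gg t) * indicator {u<..} t * indicator {t-u..1/3-u} y \<partial>lborel)
       = ennreal (27/2 * t) * indicator {u<..<1/3} t"
proof -
  have "(\<integral>\<^sup>+y. ennreal (gg t) * indicator {u<..} t * indicator {t-u..1/3-u} y \<partial>lborel)
      = ennreal (gg t) * indicator {u<..} t * ennreal (if t - u \<le> 1/3 - u then 1/3 - t else 0)"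
    by (subst nn_integral_cmult_indicator) (auto simp: emeasure_lborel_Icc_eq)
  also have "\<dots> = ennreal (27/2 * t) * indicator {u<..<1/3} t"
  proof (cases "u < t \<and> t < 1/3")
    case True
    then have e: "gg t * (1/3 - t) = 27/2 * t" unfolding gg_def by (simp add: field_simps)
    then have e2: "ennreal (gg t * (1/3 - t)) = ennreal (27/2 * t)" by (simp only: e)
    moreover have "gg t \<ge> 0" using True assms unfolding gg_def by (auto intro!: divide_nonneg_pos)
    ultimately show ?thesis using True
      by (simp add: ennreal_mult''[symmetric] indicator_def e2 del: ennreal_mult_left_cong)
  next
    case False
    then show ?thesis by (auto simp: indicator_def)
  qed
  finally show ?thesis .
qed

lemma P1:
  assumes "0 \<le> u" "u < 1/3"
  shows "(\<integral>\<^sup>+y. \<integral>\<^sup>+z. indicator {0..1/3-u} y * indicator {0..<y} z * ennreal (gg (u+y-z)) \<partial>lborel \<partial>lborel)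
       = ennreal (27/4 * ((1/3)\<^sup>2 - u\<^sup>2))"
proof -
  have "(\<integral>\<^sup>+y. \<integral>\<^sup>+z. indicator {0..1/3-u} y * indicator {0..<y} z * ennreal (gg (u+y-z)) \<partial>lborel \<partial>lborel)
      = (\<integral>\<^sup>+y. \<integral>\<^sup>+t. indicator {0..1/3-u} y * indicator {u<..u+y} t * ennreal (gg t) \<partial>lborel \<partial>lborel)"
  proof (rule nn_integral_cong)
    fix y
    have "(\<integral>\<^sup>+z. indicator {0..1/3-u} y * indicator {0..<y} z * ennreal (gg (u+y-z)) \<partial>lborel)
        = (\<integral>\<^sup>+t. indicator {0..1/3-u} y * indicator {0..<y} (u+y+ -1*t) * ennreal (gg (u+y-(u+y+ -1*t))) \<partial>lborel)"
      by (subst nn_integral_real_affine[where c="-1" and t="u+y"]) auto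
    also have "\<dots> = (\<integral>\<^sup>+t. indicator {0..1/3-u} y * indicator {u<..u+y} t * ennreal (gg t) \<partial>lborel)"
      by (auto intro!: nn_integral_cong simp: indicator_def)
    finally show "(\<integral>\<^sup>+z. indicator {0..1/3-u} y * indicator {0..<y} z * ennreal (gg (u+y-z)) \<partial>lborel)
        = (\<integral>\<^sup>+t. indicator {0..1/3-u} y * indicator {u<..u+y} t * ennreal (gg t) \<partial>lborel)" .
  qed
  also have "\<dots> = (\<integral>\<^sup>+t. \<integral>\<^sup>+y. indicator {0..1/3-u} y * indicator {u<..u+y} t * ennreal (gg t) \<partial>lborel \<partial>lborel)"
    by (rule swap2) measurable
  also have "\<dots> = (\<integral>\<^sup>+t. \<integral>\<^sup>+y. ennreal (gg t) * indicator {u<..} t * indicator {t-u..1/3-u} y \<partial>lborel \<partial>lborel)"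
    using assms by (auto intro!: nn_integral_cong simp: indicator_def)
  also have "\<dots> = (\<integral>\<^sup>+t. ennreal (27/2 * t) * indicator {u<..<1/3} t \<partial>lborel)"
    using inner_y[OF assms] by simp
  also have "\<dots> = ennreal (27/4 * ((1/3)\<^sup>2 - u\<^sup>2))" by (rule int_lin[OF assms])
  finally show ?thesis .
qed

lemma P3:
  assumes "0 \<le> u" "u < 1/3"
  shows "(\<integral>\<^sup>+y. \<integral>\<^sup>+z. indicator {0..1/3-u} y * indicator {y+u<..1/3} z * ennreal (gg (z-y)) \<partial>lborel \<partial>lborel)
       = ennreal (27/4 * ((1/3)\<^sup>2 - u\<^sup>2))"
proof -
  have "(\<integral>\<^sup>+y. \<integral>\<^sup>+z. indicator {0..1/3-u} y * indicator {y+u<..1/3} z * ennreal (gg (z-y)) \<partial>lborel \<partial>lborel)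
      = (\<integral>\<^sup>+y. \<integral>\<^sup>+t. indicator {0..1/3-u} y * indicator {u<..1/3-y} t * ennreal (gg t) \<partial>lborel \<partial>lborel)"
  proof (rule nn_integral_cong)
    fix y
    have "(\<integral>\<^sup>+z. indicator {0..1/3-u} y * indicator {y+u<..1/3} z * ennreal (gg (z-y)) \<partial>lborel)
        = (\<integral>\<^sup>+t. indicator {0..1/3-u} y * indicator {y+u<..1/3} (y+1*t) * ennreal (gg ((y+1*t)-y)) \<partial>lborel)"
      by (subst nn_integral_real_affine[where c="1" and t="y"]) auto
    also have "\<dots> = (\<integral>\<^sup>+t. indicator {0..1/3-u} y * indicator {u<..1/3-y} t * ennreal (gg t) \<partial>lborel)"
      by (auto intro!: nn_integral_cong simp: indicator_def)
    finally show "(\<integral>\<^sup>+z. indicator {0..1/3-u} y * indicator {y+u<..1/3} z * ennreal (gg (z-y)) \<partial>lborel)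
        = (\<integral>\<^sup>+t. indicator {0..1/3-u} y * indicator {u<..1/3-y} t * ennreal (gg t) \<partial>lborel)" .
  qed
  also have "\<dots> = (\<integral>\<^sup>+t. \<integral>\<^sup>+y. indicator {0..1/3-u} y * indicator {u<..1/3-y} t * ennreal (gg t) \<partial>lborel \<partial>lborel)"
    by (rule swap2) measurable
  also have "\<dots> = (\<integral>\<^sup>+t. \<integral>\<^sup>+y. ennreal (gg t) * indicator {u<..} t * indicator {0..1/3-t} y \<partial>lborel \<partial>lborel)"
    using assms by (auto intro!: nn_integral_cong simp: indicator_def)
  also have "\<dots> = (\<integral>\<^sup>+t. ennreal (27/2 * t) * indicator {u<..<1/3} t \<partial>lborel)"
  proof (rule nn_integral_cong)
    fix t
    have "(\<integral>\<^sup>+y. ennreal (gg t) * indicator {u<..} t * indicator {0..1/3-t} y \<partial>lborel)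
        = (\<integral>\<^sup>+y. ennreal (gg t) * indicator {u<..} t * indicator {t-u..1/3-u} y \<partial>lborel)"
      by (simp add: nn_integral_cmult_indicator emeasure_lborel_Icc_eq)
    then show "(\<integral>\<^sup>+y. ennreal (gg t) * indicator {u<..} t * indicator {0..1/3-t} y \<partial>lborel)
        = ennreal (27/2 * t) * indicator {u<..<1/3} t" using inner_y[OF assms] by simp
  qed
  also have "\<dots> = ennreal (27/4 * ((1/3)\<^sup>2 - u\<^sup>2))" by (rule int_lin[OF assms])
  finally show ?thesis .
qed

definition Hd :: "real \<times> real \<times> real \<Rightarrow> ennreal" where
  "Hd p = indicator cube3 p * ennreal (h_fun p)"

lemma Hd_alt: "Hd (x,y,z) = (if 0 \<le> x \<and> x \<le> 1/3 \<and> 0 \<le> y \<and> y \<le> 1/3 \<and> 0 \<le> z \<and> z \<le> 1/3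
    then ennreal (s_fun (\<bar>x - y\<bar> + \<bar>y - z\<bar> + \<bar>z - x\<bar>)) else 0)"
  by (simp add: Hd_def cube3_def h_fun_def indicator_def)

lemma Hd_meas[measurable]: "Hd \<in> borel_measurable (borel \<Otimes>\<^sub>M (borel \<Otimes>\<^sub>M borel))"
proof -
  have eq: "Hd = (\<lambda>(x,y,z). (if 0 \<le> x \<and> x \<le> 1/3 \<and> 0 \<le> y \<and> y \<le> 1/3 \<and> 0 \<le> z \<and> z \<le> 1/3
    then ennreal (s_fun (\<bar>x - y\<bar> + \<bar>y - z\<bar> + \<bar>z - x\<bar>)) else 0))"
    by (auto simp: Hd_alt fun_eq_iff)
  show ?thesis apply (subst eq) unfolding s_fun_def by measurable
qed

lemma Hd_sym12: "Hd (x,y,z) = Hd (y,x,z)"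
  by (simp add: Hd_alt abs_minus_commute) (auto simp: algebra_simps abs_minus_commute)

lemma Hd_sym23: "Hd (x,y,z) = Hd (x,z,y)"
  by (simp add: Hd_alt abs_minus_commute) (auto simp: algebra_simps abs_minus_commute)

lemma s_fun_gg: "s_fun (2 * d) = gg d"
proof (cases "d = 1/3")
  case True then show ?thesis by (simp only: True) (simp add: s_fun_def gg_def)
next
  case False
  then have "2 - 3 * (2*d) \<noteq> 0" "1/3 - d \<noteq> 0" by auto
  then show ?thesis unfolding s_fun_def gg_def by (simp add: field_simps)
qed

lemma Hd_split:
  assumes "0 \<le> u" "u < 1/3"
  shows "Hd (u+y,y,z) = indicator {0..1/3-u} y * indicator {0..<y} z * ennreal (gg (u+y-z))
     + indicator {0..1/3-u} y * indicator {y..y+u} z * ennreal (gg u)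
     + indicator {0..1/3-u} y * indicator {y+u<..1/3} z * ennreal (gg (z-y))"
proof (cases "0 \<le> y \<and> y \<le> 1/3-u")
  case False
  then show ?thesis using assms by (auto simp: Hd_alt indicator_def)
next
  case yin: True
  consider "z < 0" | "0 \<le> z \<and> z < y" | "y \<le> z \<and> z \<le> y+u" | "y+u < z \<and> z \<le> 1/3" | "z > 1/3"
    by linarith
  then show ?thesis
  proof cases
    case 2
    then have v: "\<bar>u + y - y\<bar> + \<bar>y - z\<bar> + \<bar>z - (u + y)\<bar> = 2 * (u+y-z)" using assms by auto
    have "Hd (u+y,y,z) = ennreal (s_fun (2 * (u+y-z)))" unfolding Hd_alt v using 2 yin assms by simp
    then show ?thesis using 2 yin assms by (simp only: s_fun_gg) (simp add: indicator_def)
  next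
    case 3
    then have v: "\<bar>u + y - y\<bar> + \<bar>y - z\<bar> + \<bar>z - (u + y)\<bar> = 2 * (u)" using assms by auto
    have "Hd (u+y,y,z) = ennreal (s_fun (2 * (u)))" unfolding Hd_alt v using 3 yin assms by simp
    then show ?thesis using 3 yin assms by (simp only: s_fun_gg) (simp add: indicator_def)
  next
    case 4
    then have v: "\<bar>u + y - y\<bar> + \<bar>y - z\<bar> + \<bar>z - (u + y)\<bar> = 2 * (z-y)" using assms by auto
    have "Hd (u+y,y,z) = ennreal (s_fun (2 * (z-y)))" unfolding Hd_alt v using 4 yin assms by simp
    then show ?thesis using 4 yin assms by (simp only: s_fun_gg) (simp add: indicator_def)
  qed (use yin assms in \<open>auto simp: Hd_alt indicator_def\<close>)
qed

lemma P2:
  assumes "0 \<le> u" "u < 1/3"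
  shows "(\<integral>\<^sup>+y. \<integral>\<^sup>+z. indicator {0..1/3-u} y * indicator {y..y+u} z * ennreal (gg u) \<partial>lborel \<partial>lborel)
       = ennreal (27/2 * u\<^sup>2)"
proof -
  have "(\<integral>\<^sup>+y. \<integral>\<^sup>+z. indicator {0..1/3-u} y * indicator {y..y+u} z * ennreal (gg u) \<partial>lborel \<partial>lborel)
     = (\<integral>\<^sup>+y. ennreal (gg u * u) * indicator {0..1/3-u} y \<partial>lborel)"
  proof (rule nn_integral_cong)
    fix y
    have "(\<integral>\<^sup>+z. indicator {0..1/3-u} y * indicator {y..y+u} z * ennreal (gg u) \<partial>lborel)
       = (\<integral>\<^sup>+z. (indicator {0..1/3-u} y * ennreal (gg u)) * indicator {y..y+u} z \<partial>lborel)"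
      by (auto intro!: nn_integral_cong simp: mult_ac)
    also have "\<dots> = indicator {0..1/3-u} y * ennreal (gg u) * ennreal u"
      using assms by (subst nn_integral_cmult_indicator) auto
    also have "\<dots> = ennreal (gg u * u) * indicator {0..1/3-u} y"
    proof -
      have "gg u \<ge> 0" using assms unfolding gg_def by simp
      then have "ennreal (gg u) * ennreal u = ennreal (gg u * u)" using assms by (simp add: ennreal_mult)
      then show ?thesis by (metis mult.commute mult.left_commute)
    qed
    finally show "(\<integral>\<^sup>+z. indicator {0..1/3-u} y * indicator {y..y+u} z * ennreal (gg u) \<partial>lborel)
       = ennreal (gg u * u) * indicator {0..1/3-u} y" .
  qed
  also have "\<dots> = ennreal (gg u * u) * ennreal (1/3 - u)"
    using assms by (subst nn_integral_cmult_indicator) auto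
  also have "\<dots> = ennreal (27/2 * u\<^sup>2)"
  proof -
    have "gg u * u * (1/3 - u) = 27/2 * u\<^sup>2" using assms unfolding gg_def by (simp add: field_simps power2_eq_square)
    moreover have "gg u * u \<ge> 0" using assms unfolding gg_def by simp
    ultimately show ?thesis using assms by (simp add: ennreal_mult''[symmetric] del: ennreal_mult_left_cong)
  qed
  finally show ?thesis .
qed

lemma core_pos:
  assumes "0 \<le> u" "u < 1/3"
  shows "(\<integral>\<^sup>+y. \<integral>\<^sup>+z. Hd (u+y,y,z) \<partial>lborel \<partial>lborel) = ennreal (3/2)"
proof -
  have "(\<integral>\<^sup>+y. \<integral>\<^sup>+z. Hd (u+y,y,z) \<partial>lborel \<partial>lborel)
    = (\<integral>\<^sup>+y. (\<integral>\<^sup>+z. indicator {0..1/3-u} y * indicator {0..<y} z * ennreal (gg (u+y-z)) \<partial>lborel)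
      + (\<integral>\<^sup>+z. indicator {0..1/3-u} y * indicator {y..y+u} z * ennreal (gg u) \<partial>lborel)
      + (\<integral>\<^sup>+z. indicator {0..1/3-u} y * indicator {y+u<..1/3} z * ennreal (gg (z-y)) \<partial>lborel) \<partial>lborel)"
    apply (rule nn_integral_cong)
    apply (simp only: Hd_split[OF assms])
    apply (subst nn_integral_add, measurable)+
    done
  also have "\<dots> = ennreal (27/4 * ((1/3)\<^sup>2 - u\<^sup>2)) + ennreal (27/2 * u\<^sup>2) + ennreal (27/4 * ((1/3)\<^sup>2 - u\<^sup>2))"
    apply (subst nn_integral_add, measurable)+
    apply (simp only: P1[OF assms] P2[OF assms] P3[OF assms])
    done
  also have "\<dots> = ennreal (3/2)"
  proof -
    have "u\<^sup>2 \<le> (1/3)\<^sup>2" using assms by (intro power_mono) auto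
    then show ?thesis by (simp add: ennreal_plus[symmetric] del: ennreal_plus) (simp add: field_simps power2_eq_square)
  qed
  finally show ?thesis .
qed

lemma core_all:
  assumes "u \<noteq> 1/3" "u \<noteq> -1/3"
  shows "(\<integral>\<^sup>+y. \<integral>\<^sup>+z. Hd (u+y,y,z) \<partial>lborel \<partial>lborel) = ennreal (3/2) * indicator {-1/3<..<1/3} u"
proof -
  consider "0 \<le> u \<and> u < 1/3" | "-1/3 < u \<and> u < 0" | "u > 1/3 \<or> u < -1/3" using assms by linarith
  then show ?thesis
  proof cases
    case 1 then show ?thesis using core_pos[of u] by (simp add: indicator_def)
  next
    case 2
    have "(\<integral>\<^sup>+y. \<integral>\<^sup>+z. Hd (u+y,y,z) \<partial>lborel \<partial>lborel)
        = (\<integral>\<^sup>+y. \<integral>\<^sup>+z. Hd (u+(-u+1*y),(-u+1*y),z) \<partial>lborel \<partial>lborel)"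
      by (subst nn_integral_real_affine[where c=1 and t="-u"]) auto
    also have "\<dots> = (\<integral>\<^sup>+y. \<integral>\<^sup>+z. Hd ((-u)+y,y,z) \<partial>lborel \<partial>lborel)"
      by (intro nn_integral_cong) (simp, rule Hd_sym12)
    also have "\<dots> = ennreal (3/2)" using 2 by (intro core_pos) auto
    finally show ?thesis using 2 by (simp add: indicator_def)
  next
    case 3
    then have "\<And>y z. Hd (u+y,y,z) = 0" by (auto simp: Hd_alt)
    then show ?thesis using 3 by (auto simp: indicator_def)
  qed
qed

lemma K:
  assumes [measurable]: "A \<in> sets borel"
  shows "(\<integral>\<^sup>+p. Hd p * indicator A (fst p - fst (snd p)) \<partial>lborel)
       = ennreal (3/2) * emeasure lborel (A \<inter> {-1/3<..<1/3})"
proof -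
  have "(\<integral>\<^sup>+p. Hd p * indicator A (fst p - fst (snd p)) \<partial>lborel)
      = (\<integral>\<^sup>+x. \<integral>\<^sup>+y. \<integral>\<^sup>+z. Hd (x,y,z) * indicator A (x - y) \<partial>lborel \<partial>lborel \<partial>lborel)"
    by (subst tri) (simp_all add: borel_prod[symmetric])
  also have "\<dots> = (\<integral>\<^sup>+y. \<integral>\<^sup>+x. \<integral>\<^sup>+z. Hd (x,y,z) * indicator A (x - y) \<partial>lborel \<partial>lborel \<partial>lborel)"
    by (rule swap12[where F="\<lambda>(x,y,z). Hd (x,y,z) * indicator A (x - y)", simplified]) measurable
  also have "\<dots> = (\<integral>\<^sup>+y. \<integral>\<^sup>+u. \<integral>\<^sup>+z. Hd (y+u,y,z) * indicator A u \<partial>lborel \<partial>lborel \<partial>lborel)"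
  proof (rule nn_integral_cong)
    fix y
    show "(\<integral>\<^sup>+x. \<integral>\<^sup>+z. Hd (x,y,z) * indicator A (x - y) \<partial>lborel \<partial>lborel)
        = (\<integral>\<^sup>+u. \<integral>\<^sup>+z. Hd (y+u,y,z) * indicator A u \<partial>lborel \<partial>lborel)"
      by (subst nn_integral_real_affine[where c=1 and t="y"]) auto
  qed
  also have "\<dots> = (\<integral>\<^sup>+u. \<integral>\<^sup>+y. \<integral>\<^sup>+z. Hd (y+u,y,z) * indicator A u \<partial>lborel \<partial>lborel \<partial>lborel)"
    by (rule swap12[where F="\<lambda>(y,u,z). Hd (y+u,y,z) * indicator A u", simplified]) measurable
  also have "\<dots> = (\<integral>\<^sup>+u. (\<integral>\<^sup>+y. \<integral>\<^sup>+z. Hd (u+y,y,z) \<partial>lborel \<partial>lborel) * indicator A u \<partial>lborel)"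
    by (simp add: nn_integral_multc add.commute)
  also have "\<dots> = (\<integral>\<^sup>+u. ennreal (3/2) * indicator (A \<inter> {-1/3<..<1/3}) u \<partial>lborel)"
    apply (rule nn_integral_cong_AE)
    using AE_lborel_singleton[of "1/3"] AE_lborel_singleton[of "-1/3"]
    apply eventually_elim
    apply (subst core_all)
      apply (auto simp: indicator_def)
    done
  also have "\<dots> = ennreal (3/2) * emeasure lborel (A \<inter> {-1/3<..<1/3})"
    by (rule nn_integral_cmult_indicator) simp
  finally show ?thesis .
qed

lemma Ktri:
  assumes [measurable]: "A \<in> sets borel"
  shows "(\<integral>\<^sup>+x. \<integral>\<^sup>+y. \<integral>\<^sup>+z. Hd (x,y,z) * indicator A (x - y) \<partial>lborel \<partial>lborel \<partial>lborel)
       = ennreal (3/2) * emeasure lborel (A \<inter> {-1/3<..<1/3})"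
  using K[OF assms] by (subst (asm) tri) (simp_all add: borel_prod[symmetric])

lemma K2:
  assumes [measurable]: "A \<in> sets borel"
  shows "(\<integral>\<^sup>+p. Hd p * indicator A (fst (snd p) - snd (snd p)) \<partial>lborel)
       = ennreal (3/2) * emeasure lborel (A \<inter> {-1/3<..<1/3})"
proof -
  have "(\<integral>\<^sup>+p. Hd p * indicator A (fst (snd p) - snd (snd p)) \<partial>lborel)
      = (\<integral>\<^sup>+x. \<integral>\<^sup>+y. \<integral>\<^sup>+z. Hd (x,y,z) * indicator A (y - z) \<partial>lborel \<partial>lborel \<partial>lborel)"
    by (subst tri) (simp_all add: borel_prod[symmetric])
  also have "\<dots> = (\<integral>\<^sup>+y. \<integral>\<^sup>+x. \<integral>\<^sup>+z. Hd (x,y,z) * indicator A (y - z) \<partial>lborel \<partial>lborel \<partial>lborel)"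
    by (rule swap12[where F="\<lambda>(x,y,z). Hd (x,y,z) * indicator A (y - z)", simplified]) measurable
  also have "\<dots> = (\<integral>\<^sup>+y. \<integral>\<^sup>+z. \<integral>\<^sup>+x. Hd (x,y,z) * indicator A (y - z) \<partial>lborel \<partial>lborel \<partial>lborel)"
    by (rule swap23[where F="\<lambda>(y,x,z). Hd (x,y,z) * indicator A (y - z)", simplified]) measurable
  also have "\<dots> = (\<integral>\<^sup>+y. \<integral>\<^sup>+z. \<integral>\<^sup>+x. Hd (y,z,x) * indicator A (y - z) \<partial>lborel \<partial>lborel \<partial>lborel)"
    by (intro nn_integral_cong) (metis Hd_sym12 Hd_sym23)
  also have "\<dots> = ennreal (3/2) * emeasure lborel (A \<inter> {-1/3<..<1/3})" by (rule Ktri[OF assms])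
  finally show ?thesis .
qed

lemma K3:
  assumes [measurable]: "A \<in> sets borel"
  shows "(\<integral>\<^sup>+p. Hd p * indicator A (snd (snd p) - fst p) \<partial>lborel)
       = ennreal (3/2) * emeasure lborel (A \<inter> {-1/3<..<1/3})"
proof -
  have "(\<integral>\<^sup>+p. Hd p * indicator A (snd (snd p) - fst p) \<partial>lborel)
      = (\<integral>\<^sup>+x. \<integral>\<^sup>+y. \<integral>\<^sup>+z. Hd (x,y,z) * indicator A (z - x) \<partial>lborel \<partial>lborel \<partial>lborel)"
    by (subst tri) (simp_all add: borel_prod[symmetric])
  also have "\<dots> = (\<integral>\<^sup>+x. \<integral>\<^sup>+z. \<integral>\<^sup>+y. Hd (x,y,z) * indicator A (z - x) \<partial>lborel \<partial>lborel \<partial>lborel)"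
    by (rule swap23[where F="\<lambda>(x,y,z). Hd (x,y,z) * indicator A (z - x)", simplified]) measurable
  also have "\<dots> = (\<integral>\<^sup>+z. \<integral>\<^sup>+x. \<integral>\<^sup>+y. Hd (x,y,z) * indicator A (z - x) \<partial>lborel \<partial>lborel \<partial>lborel)"
    by (rule swap12[where F="\<lambda>(x,z,y). Hd (x,y,z) * indicator A (z - x)", simplified]) measurable
  also have "\<dots> = (\<integral>\<^sup>+z. \<integral>\<^sup>+x. \<integral>\<^sup>+y. Hd (z,x,y) * indicator A (z - x) \<partial>lborel \<partial>lborel \<partial>lborel)"
    by (intro nn_integral_cong) (metis Hd_sym12 Hd_sym23)
  also have "\<dots> = ennreal (3/2) * emeasure lborel (A \<inter> {-1/3<..<1/3})" by (rule Ktri[OF assms])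
  finally show ?thesis .
qed



lemma win_meas[measurable (raw)]:
  assumes [measurable]: "f \<in> borel_measurable M" "g \<in> borel_measurable M"
  shows "(\<lambda>x. win (f x) (g x)) \<in> borel_measurable M"
  unfolding win_def by measurable

lemma win_bounds: "0 \<le> win x y" "win x y \<le> 1" by (auto simp: win_def)

lemma win_swap: "win x y + win y x = 1" by (auto simp: win_def)

lemma comp_meas:
  assumes "sets M = sets (bid_space n)" "i < n"
  shows "(\<lambda>b. b i) \<in> borel_measurable M"
  using assms by (simp add: measurable_cong_sets[OF assms(1) refl] bid_space_def)

lemma sum_win_meas:
  assumes "sets MB = sets (bid_space n)" "sets MA = sets (bid_space n)"
  shows "(\<lambda>(b,a). \<Sum>i<n. win (b i) (a i)) \<in> borel_measurable (MB \<Otimes>\<^sub>M MA)"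
proof -
  have "(\<lambda>(b,a). \<Sum>i<n. win (b i) (a i)) \<in> borel_measurable (bid_space n \<Otimes>\<^sub>M bid_space n)"
    unfolding bid_space_def by measurable
  then show ?thesis
    by (subst measurable_cong_sets[OF sets_pair_measure_cong[OF assms] refl])
qed

lemma sum_win_bound: "\<bar>\<Sum>i<n. win (b i) (a i)\<bar> \<le> real n"
proof -
  have "0 \<le> (\<Sum>i<n. win (b i) (a i))" by (intro sum_nonneg) (simp add: win_bounds)
  moreover have "(\<Sum>i<n. win (b i) (a i)) \<le> (\<Sum>i<n. 1)" by (intro sum_mono) (simp add: win_bounds)
  ultimately show ?thesis by simp
qed

lemma UB_gen:
  assumes pM: "prob_space M" and sM: "sets M = sets (bid_space n)"
  shows "exp_wins n M M = real n / 2"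
proof -
  interpret P: pair_prob_space M M
    by (simp add: pair_prob_space_def pair_sigma_finite_def prob_space_imp_sigma_finite pM)
  define f where "f = (\<lambda>(b::nat\<Rightarrow>real,a::nat\<Rightarrow>real). \<Sum>i<n. win (b i) (a i))"
  have fm[measurable]: "f \<in> borel_measurable (M \<Otimes>\<^sub>M M)" unfolding f_def by (rule sum_win_meas[OF sM sM])
  have fi: "integrable (M \<Otimes>\<^sub>M M) f"
    apply (rule P.integrable_const_bound[where B="real n"])
     apply (rule AE_I2) apply (auto simp: f_def sum_win_bound split: prod.splits)[1]
    apply (rule fm)
    done
  have swm: "(\<lambda>(x,y). (y,x)) \<in> measurable (M \<Otimes>\<^sub>M M) (M \<Otimes>\<^sub>M M)" by measurable
  have "integral\<^sup>L (M \<Otimes>\<^sub>M M) f = integral\<^sup>L (distr (M \<Otimes>\<^sub>M M) (M \<Otimes>\<^sub>M M) (\<lambda>(x, y). (y, x))) f"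
    using P.distr_pair_swap by simp
  also have "\<dots> = integral\<^sup>L (M \<Otimes>\<^sub>M M) (\<lambda>p. f (case p of (x,y) \<Rightarrow> (y,x)))"
    by (rule integral_distr[OF swm]) simp
  finally have e1: "integral\<^sup>L (M \<Otimes>\<^sub>M M) f = integral\<^sup>L (M \<Otimes>\<^sub>M M) (\<lambda>p. f (case p of (x,y) \<Rightarrow> (y,x)))" .
  have fi2: "integrable (M \<Otimes>\<^sub>M M) (\<lambda>p. f (case p of (x,y) \<Rightarrow> (y,x)))"
    apply (rule P.integrable_const_bound[where B="real n"])
     apply (rule AE_I2) apply (auto simp: f_def sum_win_bound split: prod.splits)[1]
    using swm by measurable
  have "integral\<^sup>L (M \<Otimes>\<^sub>M M) f + integral\<^sup>L (M \<Otimes>\<^sub>M M) (\<lambda>p. f (case p of (x,y) \<Rightarrow> (y,x)))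
      = integral\<^sup>L (M \<Otimes>\<^sub>M M) (\<lambda>p. f p + f (case p of (x,y) \<Rightarrow> (y,x)))"
    by (rule Bochner_Integration.integral_add[OF fi fi2, symmetric])
  also have "\<dots> = integral\<^sup>L (M \<Otimes>\<^sub>M M) (\<lambda>p. real n)"
    by (rule Bochner_Integration.integral_cong)
       (auto simp: f_def sum.distrib[symmetric] win_swap split: prod.splits)
  also have "\<dots> = real n" by (simp add: P.prob_space)
  finally show ?thesis unfolding exp_wins_def f_def[symmetric] using e1 by simp
qed

lemma LB_gen:
  assumes pB: "prob_space MB" and sB: "sets MB = sets (bid_space n)"
    and pA: "prob_space MA" and sA: "sets MA = sets (bid_space n)"
    and vA: "AE a in MA. valid_bid n a"
    and marg: "\<And>i c. i < n \<Longrightarrow> c > 0 \<Longrightarrow> measure MB {b \<in> space MB. c < b i} \<ge> 1 - real n * c / 2"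
  shows "exp_wins n MB MA \<ge> real n / 2"
proof -
  interpret P: pair_prob_space MB MA
    by (simp add: pair_prob_space_def pair_sigma_finite_def prob_space_imp_sigma_finite pB pA)
  interpret B: prob_space MB by (rule pB)
  interpret A: prob_space MA by (rule pA)
  define f where "f = (\<lambda>(b::nat\<Rightarrow>real) (a::nat\<Rightarrow>real). \<Sum>i<n. win (b i) (a i))"
  have fm[measurable]: "case_prod f \<in> borel_measurable (MB \<Otimes>\<^sub>M MA)" unfolding f_def
    using sum_win_meas[OF sB sA] by simp
  have fi: "integrable (MB \<Otimes>\<^sub>M MA) (case_prod f)"
    apply (rule P.integrable_const_bound[where B="real n"])
     apply (rule AE_I2) apply (auto simp: f_def sum_win_bound split: prod.splits)[1]
    apply (rule fm)
    done
  have cm: "\<And>i. i < n \<Longrightarrow> (\<lambda>b. b i) \<in> borel_measurable MB" using comp_meas[OF sB] by blast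
  have single: "(\<integral>b. win (b i) c \<partial>MB) \<ge> 1 - real n * c / 2" if "i < n" "c > 0" for i c
  proof -
    note cm[OF \<open>i < n\<close>, measurable]
    have "(\<integral>b. win (b i) c \<partial>MB) \<ge> (\<integral>b. indicator {b \<in> space MB. c < b i} b \<partial>MB)"
      by (rule integral_mono) (auto intro!: P.M1.integrable_const_bound[where B=1] simp: win_def indicator_def)
    moreover have "(\<integral>b. indicator {b \<in> space MB. c < b i} b \<partial>MB) = measure MB {b \<in> space MB. c < b i}"
      by (simp add: Int_absorb2)
    ultimately show ?thesis using marg[OF that] by linarith
  qed
  have inner: "(\<integral>b. f b a \<partial>MB) \<ge> real n / 2" if "valid_bid n a" for a
  proof -
    have "(\<integral>b. f b a \<partial>MB) = (\<Sum>i<n. \<integral>b. win (b i) (a i) \<partial>MB)"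
      unfolding f_def
      by (rule Bochner_Integration.integral_sum[where f="\<lambda>i b. win (b i) (a i)"]) (auto intro!: P.M1.integrable_const_bound[where B=1] win_meas cm simp: win_bounds)
    also have "\<dots> \<ge> (\<Sum>i<n. 1 - real n * a i / 2)"
      using that single by (intro sum_mono) (auto simp: valid_bid_def)
    moreover have "(\<Sum>i<n. 1 - real n * a i / 2) = real n - real n / 2 * (\<Sum>i<n. a i)"
      by (simp add: sum_subtractf sum_distrib_left)
    moreover have "real n / 2 * (\<Sum>i<n. a i) \<le> real n / 2 * 1"
      using that by (intro mult_left_mono) (auto simp: valid_bid_def)
    ultimately show ?thesis by linarith
  qed
  have "exp_wins n MB MA = (\<integral>a. (\<integral>b. f b a \<partial>MB) \<partial>MA)"
    unfolding exp_wins_def using P.integral_snd[OF fi] by (simp add: f_def)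
  also have "\<dots> \<ge> (\<integral>a. real n / 2 \<partial>MA)"
    apply (rule integral_mono_AE)
      apply simp
     apply (rule P.integrable_snd[OF fi])
    using vA by eventually_elim (rule inner)
  moreover have "(\<integral>a. real n / 2 \<partial>MA) = real n / 2" by (simp add: P.M2.prob_space)
  ultimately show ?thesis by linarith
qed



lemma h_eq: "h_measure = density lborel Hd"
  unfolding h_measure_def Hd_def[abs_def] by simp

lemma Hd_meas': "Hd \<in> borel_measurable lborel"
  using Hd_meas by (simp add: borel_prod)

lemma sets_h: "sets h_measure = sets (borel \<Otimes>\<^sub>M (borel \<Otimes>\<^sub>M borel))"
  by (simp add: h_eq) (simp only: borel_prod)

lemma space_h[simp]: "space h_measure = UNIV"
  by (simp add: h_eq)

lemma emeasure_h_pred: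
  assumes [measurable]: "A \<in> sets borel" and g[measurable]: "g \<in> borel_measurable (borel \<Otimes>\<^sub>M (borel \<Otimes>\<^sub>M borel))"
  shows "emeasure h_measure {p. g p \<in> A} = (\<integral>\<^sup>+p. Hd p * indicator A (g p) \<partial>lborel)"
proof -
  have "{p. g p \<in> A} \<in> sets (borel \<Otimes>\<^sub>M (borel \<Otimes>\<^sub>M borel))"
  proof -
    have "{p \<in> space (borel \<Otimes>\<^sub>M (borel \<Otimes>\<^sub>M borel)). g p \<in> A} \<in> sets (borel \<Otimes>\<^sub>M (borel \<Otimes>\<^sub>M borel))"
      by measurable
    then show ?thesis by (simp add: space_pair_measure)
  qed
  then have "{p. g p \<in> A} \<in> sets lborel" by (simp only: borel_prod sets_lborel)
  then show ?thesis unfolding h_eq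
    by (subst emeasure_density[OF Hd_meas']) (auto intro!: nn_integral_cong simp: indicator_def)
qed

lemma hK1: "A \<in> sets borel \<Longrightarrow> emeasure h_measure {p. fst p - fst (snd p) \<in> A} = ennreal (3/2) * emeasure lborel (A \<inter> {-1/3<..<1/3})"
  apply (subst emeasure_h_pred, assumption)
   apply measurable
  apply (simp add: K)
  done
lemma hK2: "A \<in> sets borel \<Longrightarrow> emeasure h_measure {p. fst (snd p) - snd (snd p) \<in> A} = ennreal (3/2) * emeasure lborel (A \<inter> {-1/3<..<1/3})"
  apply (subst emeasure_h_pred, assumption)
   apply measurable
  apply (simp add: K2)
  done
lemma hK3: "A \<in> sets borel \<Longrightarrow> emeasure h_measure {p. snd (snd p) - fst p \<in> A} = ennreal (3/2) * emeasure lborel (A \<inter> {-1/3<..<1/3})"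
  apply (subst emeasure_h_pred, assumption)
   apply measurable
  apply (simp add: K3)
  done

lemma prob_h: "prob_space h_measure"
proof
  have "emeasure h_measure (space h_measure) = emeasure h_measure {p. fst p - fst (snd p) \<in> UNIV}" by simp
  also have "\<dots> = ennreal (3/2) * emeasure lborel {-1/3<..<1/3::real}" by (subst hK1) auto
  also have "\<dots> = 1" by (simp add: ennreal_mult''[symmetric])
  finally show "emeasure h_measure (space h_measure) = 1" .
qed

lemma tail_calc:
  assumes "d > -1/3"
  shows "enn2real (ennreal (3/2) * emeasure lborel ({d<..} \<inter> {-1/3<..<1/3::real})) \<ge> 1/2 - 3/2 * d"
proof (cases "d < 1/3")
  case True
  then have "{d<..} \<inter> {-1/3<..<1/3::real} = {d<..<1/3}" using assms by auto
  then show ?thesis using True by (simp add: ennreal_mult''[symmetric] enn2real_mult)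
next
  case False
  then have "{d<..} \<inter> {-1/3<..<1/3::real} = {}" by auto
  then show ?thesis using False by simp
qed



lemma sets_F2: "sets (F2 n) = sets borel" by (simp add: F2_def)
lemma space_F2[simp]: "space (F2 n) = UNIV" by (simp add: F2_def)

lemma prob_F2: "n > 0 \<Longrightarrow> prob_space (F2 n)"
  unfolding F2_def by (rule prob_space_uniform_measure) auto

lemma measure_F2: "n > 0 \<Longrightarrow> B \<in> sets borel \<Longrightarrow> measure (F2 n) B = measure lborel ({0..2/real n} \<inter> B) / (2 / real n)"
  unfolding F2_def by (subst measure_uniform_measure) auto

lemma F2_tail1:
  assumes "n > 0" "c > 0"
  shows "measure (F2 n) {t. c < t} \<ge> 1 - real n * c / 2"
proof (cases "c < 2 / real n")
  case True
  have "{0..2/real n} \<inter> {t. c < t} = {c<..2/real n}" using assms by auto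
  then have "measure (F2 n) {t. c < t} = (2/real n - c) / (2 / real n)"
    using measure_F2[OF assms(1), of "{t. c < t}"] True by simp
  also have "\<dots> = 1 - real n * c / 2" using assms by (simp add: field_simps)
  finally show ?thesis by simp
next
  case False
  then have "1 - real n * c / 2 \<le> 0" using assms by (simp add: field_simps)
  then show ?thesis by (meson measure_nonneg order_trans)
qed

lemma F2_tail2:
  assumes "n > 0" "c > 0"
  shows "measure (F2 n) {t. c < 2 / real n - t} \<ge> 1 - real n * c / 2"
proof (cases "c < 2 / real n")
  case True
  have "{0..2/real n} \<inter> {t. c < 2 / real n - t} = {0..<2/real n - c}" using assms by auto
  then have "measure (F2 n) {t. c < 2 / real n - t} = (2/real n - c) / (2 / real n)"
    using measure_F2[OF assms(1), of "{t. c < 2 / real n - t}"] True by simp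
  also have "\<dots> = 1 - real n * c / 2" using assms by (simp add: field_simps)
  finally show ?thesis by simp
next
  case False
  then have "1 - real n * c / 2 \<le> 0" using assms by (simp add: field_simps)
  then show ?thesis by (meson measure_nonneg order_trans)
qed

lemma AE_F2: "n > 0 \<Longrightarrow> AE t in F2 n. 0 < t \<and> t < 2 / real n"
  unfolding F2_def
  apply (rule AE_uniform_measureI)
   apply simp
  using AE_lborel_singleton[of 0] AE_lborel_singleton[of "2 / real n"]
  by eventually_elim auto

lemma h_tail:
  fixes g :: "real \<times> real \<times> real \<Rightarrow> real"
  assumes "n > 0" "c > 0" and A: "\<And>A. A \<in> sets borel \<Longrightarrow> emeasure h_measure {p. g p \<in> A} = ennreal (3/2) * emeasure lborel (A \<inter> {-1/3<..<1/3})"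
  shows "measure h_measure {p. c < 3 / real n * (g p + 1/3)} \<ge> 1 - real n * c / 2"
proof -
  define d where "d = real n * c / 3 - 1/3"
  have "{p. c < 3 / real n * (g p + 1/3)} = {p. g p \<in> {d<..}}"
    using assms unfolding d_def by (auto simp: field_simps)
  then have "measure h_measure {p. c < 3 / real n * (g p + 1/3)} = enn2real (ennreal (3/2) * emeasure lborel ({d<..} \<inter> {-1/3<..<1/3}))"
    using A[of "{d<..}"] by (simp add: measure_def)
  also have "\<dots> \<ge> 1/2 - 3/2 * d" by (rule tail_calc) (use assms in \<open>simp add: d_def\<close>)
  finally show ?thesis unfolding d_def by (simp add: field_simps)
qed

lemma h_null:
  fixes g :: "real \<times> real \<times> real \<Rightarrow> real"
  assumes A: "\<And>A. A \<in> sets borel \<Longrightarrow> emeasure h_measure {p. g p \<in> A} = ennreal (3/2) * emeasure lborel (A \<inter> {-1/3<..<1/3})"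
  shows "AE p in h_measure. 0 < g p + 1/3"
proof -
  have "{-1/3<..} \<inter> {- 1 / 3<..<1 / 3} = {-1/3<..<1/3::real}" by auto
  then have "emeasure h_measure {p. g p \<in> {-1/3<..}} = ennreal (3/2) * emeasure lborel {-1/3<..<1/3::real}"
    using A[of "{-1/3<..}"] by simp
  also have "\<dots> = 1" by (simp add: ennreal_mult''[symmetric])
  finally have "emeasure h_measure {p. g p \<in> {-1/3<..}} = 1" .
  then have "measure h_measure {p. g p \<in> {-1/3<..}} = 1" by (simp add: measure_def)
  then have "AE p in h_measure. p \<in> {p. g p \<in> {-1/3<..}}"
    by (rule prob_space.AE_prob_1[OF prob_h])
  then show ?thesis by eventually_elim auto
qed



definition fe :: "nat \<Rightarrow> real \<Rightarrow> nat \<Rightarrow> real" where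
  "fe n t = (\<lambda>i\<in>{..<n}. if i < n div 2 then t else 2 / real n - t)"

definition fo :: "nat \<Rightarrow> real \<times> real \<times> real \<times> real \<Rightarrow> nat \<Rightarrow> real" where
  "fo n = (\<lambda>(t, x, y, z). \<lambda>i\<in>{..<n}.
           if i < n div 2 - 1 then t
           else if i < 2 * (n div 2) - 2 then 2 / real n - t
           else if i = 2 * (n div 2) - 2 then 3 / real n * (x - y + 1/3)
           else if i = 2 * (n div 2) - 1 then 3 / real n * (y - z + 1/3)
           else 3 / real n * (z - x + 1/3))"

lemma alg_even: "even n \<Longrightarrow> alg_B n = distr (F2 n) (bid_space n) (fe n)"
  by (simp add: alg_B_def fe_def[abs_def])

lemma alg_odd: "odd n \<Longrightarrow> alg_B n = distr (F2 n \<Otimes>\<^sub>M h_measure) (bid_space n) (fo n)"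
  by (simp add: alg_B_def fo_def)

lemma fe_meas: "fe n \<in> measurable (F2 n) (bid_space n)"
  apply (subst measurable_cong_sets[OF sets_F2 refl])
  unfolding fe_def[abs_def] bid_space_def by measurable

lemma fo_meas: "fo n \<in> measurable (F2 n \<Otimes>\<^sub>M h_measure) (bid_space n)"
  apply (subst measurable_cong_sets[OF sets_pair_measure_cong[OF sets_F2 sets_h] refl])
  unfolding fo_def bid_space_def by measurable

lemma valid_meas: "{x \<in> space (bid_space n). valid_bid n x} \<in> sets (bid_space n)"
  unfolding valid_bid_def bid_space_def by measurable

lemma comp_set_meas: "i < n \<Longrightarrow> {b \<in> space (bid_space n). c < b i} \<in> sets (bid_space n)"
  unfolding bid_space_def by measurable

lemma sum_two: "(\<Sum>i<2*m. if i < m then a else b) = real m * a + real m * (b::real)"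
proof -
  have e: "{..<2*m} = {..<m} \<union> {m..<2*m}" by auto
  have "(\<Sum>i<2*m. if i < m then a else b) = (\<Sum>i\<in>{..<m} \<union> {m..<2*m}. if i < m then a else b)"
    by (simp only: e)
  also have "\<dots> = (\<Sum>i<m. if i < m then a else b) + (\<Sum>i\<in>{m..<2*m}. if i < m then a else b)"
    by (rule sum.union_disjoint) auto
  also have "\<dots> = (\<Sum>i<m. a) + (\<Sum>i\<in>{m..<2*m}. b)"
    by (intro arg_cong2[where f="(+)"] sum.cong) auto
  finally show ?thesis by simp
qed

lemma sets_alg: "sets (alg_B n) = sets (bid_space n)"
  by (cases "even n") (simp_all add: alg_even alg_odd)

lemma space_alg: "space (alg_B n) = space (bid_space n)"
  by (cases "even n") (simp_all add: alg_even alg_odd)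



lemma meas_times:
  assumes "prob_space M1" "prob_space M2" "A \<in> sets M1" "B \<in> sets M2"
  shows "measure (M1 \<Otimes>\<^sub>M M2) (A \<times> B) = measure M1 A * measure M2 B"
proof -
  interpret pair_sigma_finite M1 M2
    by (simp add: pair_sigma_finite_def prob_space_imp_sigma_finite assms)
  show ?thesis unfolding measure_def
    by (simp add: M2.emeasure_pair_measure_Times assms enn2real_mult)
qed

lemma prob_pair: "prob_space M1 \<Longrightarrow> prob_space M2 \<Longrightarrow> prob_space (M1 \<Otimes>\<^sub>M M2)"
proof -
  assume a: "prob_space M1" "prob_space M2"
  interpret Q: pair_prob_space M1 M2
    by (simp add: pair_prob_space_def pair_sigma_finite_def prob_space_imp_sigma_finite a)
  show ?thesis by (rule Q.prob_space_axioms)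
qed

lemma rs_even:
  assumes "even n" "n \<ge> 2"
  shows "rand_strategy n (alg_B n)"
proof -
  obtain m where m: "n = 2 * m" using assms(1) by blast
  have n0: "n > 0" using assms by simp
  have ndiv: "n div 2 = m" using m by simp
  have valid: "valid_bid n (fe n t)" if t: "0 < t \<and> t < 2 / real n" for t
  proof -
    have "(\<Sum>i<n. fe n t i) = (\<Sum>i<2*m. if i < m then t else 2 / real n - t)"
      unfolding m fe_def by (intro sum.cong) (auto simp: m)
    also have "\<dots> = real m * (2 / real n)" by (subst sum_two) (simp add: algebra_simps)
    also have "\<dots> = 1" using m n0 by simp
    finally show ?thesis unfolding valid_bid_def using t by (auto simp: fe_def)
  qed
  show ?thesis unfolding rand_strategy_def
  proof (intro conjI)
    show "sets (alg_B n) = sets (bid_space n)" by (rule sets_alg)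
    show "prob_space (alg_B n)" unfolding alg_even[OF assms(1)]
      by (rule prob_space.prob_space_distr[OF prob_F2[OF n0] fe_meas])
    show "AE b in alg_B n. valid_bid n b" unfolding alg_even[OF assms(1)]
      apply (subst AE_distr_iff[OF fe_meas valid_meas])
      using AE_F2[OF n0] by eventually_elim (rule valid)
  qed
qed

lemma odd_sum:
  assumes n: "n = 2 * k + 3"
  shows "(\<Sum>i<n. fo n (t,x,y,z) i) = 1"
proof -
  have d: "n div 2 = k + 1" using n by simp
  have s1: "(\<Sum>i<n. fo n (t,x,y,z) i) = (\<Sum>i<2*k. fo n (t,x,y,z) i) + fo n (t,x,y,z) (2*k)
      + fo n (t,x,y,z) (2*k+1) + fo n (t,x,y,z) (2*k+2)"
    unfolding n by (simp add: numeral_3_eq_3)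
  have "(\<Sum>i<2*k. fo n (t,x,y,z) i) = (\<Sum>i<2*k. if i < k then t else 2 / real n - t)"
    by (intro sum.cong) (auto simp: fo_def d n)
  also have "\<dots> = real k * (2 / real n)" by (subst sum_two) (simp add: algebra_simps)
  finally have s2: "(\<Sum>i<2*k. fo n (t,x,y,z) i) = real k * (2 / real n)" .
  have a: "fo n (t,x,y,z) (2*k) = 3 / real n * (x - y + 1/3)" unfolding fo_def d by (simp add: n)
  have b: "fo n (t,x,y,z) (2*k+1) = 3 / real n * (y - z + 1/3)" unfolding fo_def d by (simp add: n)
  have c: "fo n (t,x,y,z) (2*k+2) = 3 / real n * (z - x + 1/3)" unfolding fo_def d by (simp add: n)
  have e: "3 / real n * (x - y + 1/3) + 3 / real n * (y - z + 1/3) + 3 / real n * (z - x + 1/3)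
        = 3 / real n * ((x - y + 1/3) + (y - z + 1/3) + (z - x + 1/3))" by (simp only: distrib_left)
  have "(\<Sum>i<n. fo n (t,x,y,z) i) = real k * (2 / real n) + 3 / real n"
    unfolding s1 s2 a b c add.assoc[symmetric] using e by simp
  also have "\<dots> = 1"
  proof -
    have "real k \<ge> 0" by simp
    then have nz: "2 * real k + 3 \<noteq> 0" by linarith
    show ?thesis using n nz by (simp add: divide_simps)
  qed
  finally show ?thesis .
qed

lemma odd_pos:
  assumes n: "n = 2 * k + 3" and t: "0 < t" "t < 2 / real n"
    and h: "0 < x - y + 1/3" "0 < y - z + 1/3" "0 < z - x + 1/3" and i: "i < n"
  shows "0 < fo n (t,x,y,z) i"
proof -
  have d: "n div 2 = k + 1" using n by simp
  have n0: "real n > 0" using n by simp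
  show ?thesis using t h i n0 by (auto simp: fo_def d)
qed

lemma rs_odd:
  assumes "odd n" "n \<ge> 2"
  shows "rand_strategy n (alg_B n)"
proof -
  obtain j where j: "n = 2 * j + 1" using assms(1) oddE by blast
  define k where "k = j - 1"
  have n: "n = 2 * k + 3" using j assms(2) unfolding k_def by simp
  have n0: "n > 0" using assms by simp
  interpret Q: pair_prob_space "F2 n" h_measure
    by (simp add: pair_prob_space_def pair_sigma_finite_def prob_space_imp_sigma_finite prob_F2[OF n0] prob_h)
  have vp: "Measurable.pred (bid_space n) (valid_bid n)" using valid_meas by (simp add: pred_def)
  have vp2: "Measurable.pred (F2 n \<Otimes>\<^sub>M h_measure) (\<lambda>p. valid_bid n (fo n p))"
    using measurable_compose[OF fo_meas vp] by (simp add: comp_def)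
  have AEh: "AE q in h_measure. 0 < fst q - fst (snd q) + 1/3 \<and> 0 < fst (snd q) - snd (snd q) + 1/3 \<and> 0 < snd (snd q) - fst q + 1/3"
  proof -
    have "AE q in h_measure. 0 < fst q - fst (snd q) + 1/3" by (rule h_null) (erule hK1)
    moreover have "AE q in h_measure. 0 < fst (snd q) - snd (snd q) + 1/3" by (rule h_null) (erule hK2)
    moreover have "AE q in h_measure. 0 < snd (snd q) - fst q + 1/3" by (rule h_null) (erule hK3)
    ultimately show ?thesis by eventually_elim auto
  qed
  have "AE t in F2 n. AE q in h_measure. valid_bid n (fo n (t, q))"
    using AE_F2[OF n0]
  proof eventually_elim
    case (elim t)
    show ?case using AEh
    proof eventually_elim
      case (elim q)
      obtain x y z where q: "q = (x,y,z)" by (cases q) auto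
      show ?case unfolding valid_bid_def q
        using odd_sum[OF n] odd_pos[OF n] elim \<open>0 < t \<and> t < 2 / real n\<close> q by auto
    qed
  qed
  then have AEp: "AE p in F2 n \<Otimes>\<^sub>M h_measure. valid_bid n (fo n p)"
    by (subst (asm) Q.AE_pair_iff) (use vp2 in \<open>simp_all add: pred_def\<close>)
  show ?thesis unfolding rand_strategy_def
  proof (intro conjI)
    show "sets (alg_B n) = sets (bid_space n)" by (rule sets_alg)
    show "prob_space (alg_B n)" unfolding alg_odd[OF assms(1)]
      by (rule prob_space.prob_space_distr[OF Q.prob_space_axioms fo_meas])
    show "AE b in alg_B n. valid_bid n b" unfolding alg_odd[OF assms(1)]
      apply (subst AE_distr_iff[OF fo_meas valid_meas])
      by (rule AEp)
  qed
qed



lemma marg_distr: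
  assumes f: "f \<in> measurable M (bid_space n)" and i: "i < n"
  shows "measure (distr M (bid_space n) f) {b \<in> space (distr M (bid_space n) f). c < b i}
       = measure M {x \<in> space M. c < f x i}"
proof -
  have "measure (distr M (bid_space n) f) {b \<in> space (distr M (bid_space n) f). c < b i}
      = measure M (f -` {b \<in> space (bid_space n). c < b i} \<inter> space M)"
    by (simp add: measure_distr[OF f comp_set_meas[OF i]])
  also have "f -` {b \<in> space (bid_space n). c < b i} \<inter> space M = {x \<in> space M. c < f x i}"
    using measurable_space[OF f] by auto
  finally show ?thesis .
qed

lemma sets_h_pred: "Measurable.pred (borel \<Otimes>\<^sub>M (borel \<Otimes>\<^sub>M borel)) P \<Longrightarrow> {q. P q} \<in> sets h_measure"
  unfolding pred_def sets_h by (simp add: space_pair_measure)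

lemma marg_even:
  assumes "even n" "n \<ge> 2" "i < n" "c > 0"
  shows "measure (alg_B n) {b \<in> space (alg_B n). c < b i} \<ge> 1 - real n * c / 2"
proof -
  have n0: "n > 0" using assms by simp
  have "measure (alg_B n) {b \<in> space (alg_B n). c < b i} = measure (F2 n) {t. c < fe n t i}"
    unfolding alg_even[OF assms(1)] marg_distr[OF fe_meas assms(3)] by simp
  also have "\<dots> \<ge> 1 - real n * c / 2"
  proof (cases "i < n div 2")
    case True
    then have "{t. c < fe n t i} = {t. c < t}" using assms by (auto simp: fe_def)
    then show ?thesis using F2_tail1[OF n0 assms(4)] by simp
  next
    case False
    then have "{t. c < fe n t i} = {t. c < 2 / real n - t}" using assms by (auto simp: fe_def)
    then show ?thesis using F2_tail2[OF n0 assms(4)] by simp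
  qed
  finally show ?thesis .
qed

lemma marg_odd:
  assumes "odd n" "n \<ge> 2" "i < n" "c > 0"
  shows "measure (alg_B n) {b \<in> space (alg_B n). c < b i} \<ge> 1 - real n * c / 2"
proof -
  obtain j where j: "n = 2 * j + 1" using assms(1) oddE by blast
  define k where "k = j - 1"
  have n: "n = 2 * k + 3" using j assms(2) unfolding k_def by simp
  have d: "n div 2 = k + 1" using n by simp
  have n0: "n > 0" using assms by simp
  have pF: "prob_space (F2 n)" by (rule prob_F2[OF n0])
  have hU: "measure h_measure UNIV = 1" using prob_space.prob_space[OF prob_h] by simp
  have hUs: "UNIV \<in> sets h_measure" using sets.top[of h_measure] by simp
  have FU: "measure (F2 n) UNIV = 1" using prob_space.prob_space[OF pF] by simp
  have FUs: "UNIV \<in> sets (F2 n)" using sets.top[of "F2 n"] by simp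
  have "measure (alg_B n) {b \<in> space (alg_B n). c < b i} = measure (F2 n \<Otimes>\<^sub>M h_measure) {p. c < fo n p i}"
    unfolding alg_odd[OF assms(1)] marg_distr[OF fo_meas assms(3)] by (simp add: space_pair_measure)
  also have "\<dots> \<ge> 1 - real n * c / 2"
  proof -
    consider "i < k" | "k \<le> i \<and> i < 2*k" | "i = 2*k" | "i = 2*k+1" | "i = 2*k+2" using assms(3) n by linarith
    then show ?thesis
    proof cases
      case 1
      then have "{p. c < fo n p i} = {t. c < t} \<times> UNIV" using assms(3) by (auto simp: fo_def d)
      moreover have "measure (F2 n \<Otimes>\<^sub>M h_measure) ({t. c < t} \<times> UNIV) = measure (F2 n) {t. c < t}"
        by (subst meas_times[OF pF prob_h]) (auto simp: sets_F2 hU hUs)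
      ultimately show ?thesis using F2_tail1[OF n0 assms(4)] by simp
    next
      case 2
      then have "{p. c < fo n p i} = {t. c < 2 / real n - t} \<times> UNIV" using assms(3) by (auto simp: fo_def d)
      moreover have "measure (F2 n \<Otimes>\<^sub>M h_measure) ({t. c < 2 / real n - t} \<times> UNIV) = measure (F2 n) {t. c < 2 / real n - t}"
        by (subst meas_times[OF pF prob_h]) (auto simp: sets_F2 hU hUs)
      ultimately show ?thesis using F2_tail2[OF n0 assms(4)] by simp
    next
      case 3
      let ?B = "{q. c < 3 / real n * (fst q - fst (snd q) + 1/3)}"
      have "{p. c < fo n p i} = UNIV \<times> ?B" using assms(3) 3 by (auto simp: fo_def d)
      moreover have "?B \<in> sets h_measure" by (rule sets_h_pred) measurable
      then have "measure (F2 n \<Otimes>\<^sub>M h_measure) (UNIV \<times> ?B) = measure h_measure ?B"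
        by (subst meas_times[OF pF prob_h]) (auto simp: FU FUs)
      moreover have "measure h_measure ?B \<ge> 1 - real n * c / 2"
        by (rule h_tail[OF n0 assms(4)]) (erule hK1)
      ultimately show ?thesis by simp
    next
      case 4
      let ?B = "{q. c < 3 / real n * (fst (snd q) - snd (snd q) + 1/3)}"
      have "{p. c < fo n p i} = UNIV \<times> ?B" using assms(3) 4 by (auto simp: fo_def d)
      moreover have "?B \<in> sets h_measure" by (rule sets_h_pred) measurable
      then have "measure (F2 n \<Otimes>\<^sub>M h_measure) (UNIV \<times> ?B) = measure h_measure ?B"
        by (subst meas_times[OF pF prob_h]) (auto simp: FU FUs)
      moreover have "measure h_measure ?B \<ge> 1 - real n * c / 2"
        by (rule h_tail[OF n0 assms(4)]) (erule hK2)
      ultimately show ?thesis by simp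
    next
      case 5
      let ?B = "{q. c < 3 / real n * (snd (snd q) - fst q + 1/3)}"
      have "{p. c < fo n p i} = UNIV \<times> ?B" using assms(3) 5 by (auto simp: fo_def d)
      moreover have "?B \<in> sets h_measure" by (rule sets_h_pred) measurable
      then have "measure (F2 n \<Otimes>\<^sub>M h_measure) (UNIV \<times> ?B) = measure h_measure ?B"
        by (subst meas_times[OF pF prob_h]) (auto simp: FU FUs)
      moreover have "measure h_measure ?B \<ge> 1 - real n * c / 2"
        by (rule h_tail[OF n0 assms(4)]) (erule hK3)
      ultimately show ?thesis by simp
    qed
  qed
  finally show ?thesis .
qed

theorem theorem2p5:
  fixes n :: nat
  assumes "n \<ge> 2"
  shows "rand_strategy n (alg_B n)
    \<and> (\<forall>MA. rand_strategy n MA \<longrightarrow> exp_wins n (alg_B n) MA \<ge> real n / 2)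
    \<and> (\<forall>MB. rand_strategy n MB \<longrightarrow>
          (\<exists>MA. rand_strategy n MA \<and> exp_wins n MB MA \<le> real n / 2))"
proof (intro conjI allI impI)
  have rs: "rand_strategy n (alg_B n)"
    using rs_even[OF _ assms] rs_odd[OF _ assms] by blast
  then show "rand_strategy n (alg_B n)" .
  fix MA assume "rand_strategy n MA"
  then show "exp_wins n (alg_B n) MA \<ge> real n / 2"
    using rs unfolding rand_strategy_def
    by (intro LB_gen) (auto intro: marg_even[OF _ assms] marg_odd[OF _ assms])
next
  fix MB assume r: "rand_strategy n MB"
  show "\<exists>MA. rand_strategy n MA \<and> exp_wins n MB MA \<le> real n / 2"
    using r UB_gen[of MB n] unfolding rand_strategy_def by auto
qed

end
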